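(* Let $F$ be a graph of diameter $2$, $n=|V(F)|$, $t=\delta(F)$ with $t\ge 2$, and let $l>n$ be an integer. Then $\delta_i<\delta_l$ for every $i\in\{l+1,l+2,\dots,l+t-1\}$.
   Context: All graphs are simple, finite, undirected. The $F$-degree of a vertex $v$ in $G$ is the number of subgraphs of $G$ (not necessarily induced) isomorphic to $F$ and containing $v$. $A_{2l-1}$ is the graph with vertex set $\{1,\dots,2l-1\}$ in which distinct $i,j$ are adjacent iff $|i-j|\le l-1$; $F_{2l}$ is obtained from $A_{2l-1}$ by adding a new vertex $2l$ joined exactly to $1,\dots,t$. $z_i$ is the $F$-degree of $i$ in $A_{2l-1}$, $f_i$ the $F$-degree of $i$ in $F_{2l}$, and $\delta_i=f_i-z_i$. *)

theory Defs
  imports Main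
begin

type_synonym 'a graph = "'a set \<times> 'a set set"

definition simple_graph :: "'a graph \<Rightarrow> bool" where
  "simple_graph G \<longleftrightarrow> finite (fst G) \<and>
     (\<forall>e\<in>snd G. \<exists>x y. x \<in> fst G \<and> y \<in> fst G \<and> x \<noteq> y \<and> e = {x, y})"

definition adj :: "'a graph \<Rightarrow> 'a \<Rightarrow> 'a \<Rightarrow> bool" where
  "adj G x y \<longleftrightarrow> {x, y} \<in> snd G"

definition degree :: "'a graph \<Rightarrow> 'a \<Rightarrow> nat" where
  "degree G v = card {u \<in> fst G. adj G v u}"

definition min_degree :: "'a graph \<Rightarrow> nat" where
  "min_degree G = Min (degree G ` fst G)"

definition is_walk :: "'a graph \<Rightarrow> 'a list \<Rightarrow> bool" where
  "is_walk G p \<longleftrightarrow> p \<noteq> [] \<and> set p \<subseteq> fst G \<and>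
     (\<forall>i < length p - 1. adj G (p ! i) (p ! Suc i))"

definition walk_between :: "'a graph \<Rightarrow> 'a \<Rightarrow> 'a \<Rightarrow> nat \<Rightarrow> bool" where
  "walk_between G u v k \<longleftrightarrow> (\<exists>p. is_walk G p \<and> hd p = u \<and> last p = v \<and> length p = Suc k)"

definition connected_graph :: "'a graph \<Rightarrow> bool" where
  "connected_graph G \<longleftrightarrow> fst G \<noteq> {} \<and> (\<forall>u\<in>fst G. \<forall>v\<in>fst G. \<exists>k. walk_between G u v k)"

definition graph_dist :: "'a graph \<Rightarrow> 'a \<Rightarrow> 'a \<Rightarrow> nat" where
  "graph_dist G u v = (LEAST k. walk_between G u v k)"

definition has_diameter :: "'a graph \<Rightarrow> nat \<Rightarrow> bool" where
  "has_diameter G d \<longleftrightarrow> connected_graph G \<and>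
     Max {graph_dist G u v | u v. u \<in> fst G \<and> v \<in> fst G} = d"

definition subgraph :: "'a graph \<Rightarrow> 'a graph \<Rightarrow> bool" where
  "subgraph H G \<longleftrightarrow> fst H \<subseteq> fst G \<and> snd H \<subseteq> snd G \<and> (\<forall>e\<in>snd H. e \<subseteq> fst H)"

definition isomorphic :: "'a graph \<Rightarrow> 'b graph \<Rightarrow> bool" where
  "isomorphic G H \<longleftrightarrow> (\<exists>f. bij_betw f (fst G) (fst H) \<and>
     (\<forall>x\<in>fst G. \<forall>y\<in>fst G. adj G x y \<longleftrightarrow> adj H (f x) (f y)))"

definition F_degree :: "'b graph \<Rightarrow> 'a graph \<Rightarrow> 'a \<Rightarrow> nat" where
  "F_degree F G v = card {H. subgraph H G \<and> isomorphic H F \<and> v \<in> fst H}"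

definition A_graph :: "nat \<Rightarrow> nat graph" where
  "A_graph l = ({1..2*l-1}, {{i, j} | i j. i \<in> {1..2*l-1} \<and> j \<in> {1..2*l-1} \<and> i \<noteq> j
                   \<and> (i - j \<le> l - 1 \<and> j - i \<le> l - 1)})"

definition F_graph :: "nat \<Rightarrow> nat \<Rightarrow> nat graph" where
  "F_graph l t = ({1..2*l}, snd (A_graph l) \<union> {{2*l, j} | j. j \<in> {1..t}})"

end

theory Submission
  imports Defs
begin


definition Scop :: "'b graph \<Rightarrow> nat \<Rightarrow> nat \<Rightarrow> nat \<Rightarrow> nat graph set" where
  "Scop F l t x = {H. subgraph H (F_graph l t) \<and> isomorphic H F \<and> x \<in> fst H \<and> 2*l \<in> fst H}"

lemma fin_subgraphs: "finite (fst G) \<Longrightarrow> finite {H. subgraph H G}"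
proof -
  assume f: "finite (fst G)"
  have "{H. subgraph H G} \<subseteq> Pow (fst G) \<times> Pow (Pow (fst G))"
    by (fastforce simp: subgraph_def)
  moreover have "finite (Pow (fst G) \<times> Pow (Pow (fst G)))" using f by simp
  ultimately show ?thesis by (rule finite_subset)
qed

lemma fin_sub: "finite (fst G) \<Longrightarrow> finite {H. subgraph H G \<and> P H}"
  by (rule finite_subset[OF _ fin_subgraphs]) auto

lemma fstA[simp]: "fst (A_graph l) = {1..2*l-1}" by (simp add: A_graph_def)
lemma fstF[simp]: "fst (F_graph l t) = {1..2*l}" by (simp add: F_graph_def)
lemma sndF: "snd (F_graph l t) = snd (A_graph l) \<union> {{2*l, j} | j. j \<in> {1..t}}" by (simp add: F_graph_def)
lemma sndA: "e \<in> snd (A_graph l) \<longleftrightarrow> (\<exists>i j. e = {i,j} \<and> i \<in> {1..2*l-1} \<and> j \<in> {1..2*l-1} \<and> i \<noteq> j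
                   \<and> i - j \<le> l - 1 \<and> j - i \<le> l - 1)" by (simp add: A_graph_def)

lemma sub_A_iff:
  assumes "l \<ge> 1"
  shows "subgraph H (A_graph l) \<longleftrightarrow> subgraph H (F_graph l t) \<and> 2*l \<notin> fst H"
proof
  assume h: "subgraph H (A_graph l)"
  have a: "fst H \<subseteq> {1..2*l-1}" "snd H \<subseteq> snd (A_graph l)" "\<forall>e\<in>snd H. e \<subseteq> fst H"
    using h unfolding subgraph_def by auto
  have b: "{1..2*l-1} \<subseteq> {1..2*l}" "2*l \<notin> {1..2*l-1}" using assms by auto
  have c: "snd (A_graph l) \<subseteq> snd (F_graph l t)" by (simp add: sndF)
  show "subgraph H (F_graph l t) \<and> 2*l \<notin> fst H"
    unfolding subgraph_def fstF using a b c by blast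
next
  assume h: "subgraph H (F_graph l t) \<and> 2*l \<notin> fst H"
  have v: "fst H \<subseteq> {1..2*l-1}"
  proof
    fix x assume "x \<in> fst H"
    then have "x \<in> {1..2*l}" "x \<noteq> 2*l" using h unfolding subgraph_def fstF by auto
    then show "x \<in> {1..2*l-1}" by auto
  qed
  have "snd H \<subseteq> snd (A_graph l)"
  proof
    fix e assume e: "e \<in> snd H"
    then have "e \<in> snd (F_graph l t)" "e \<subseteq> fst H" using h unfolding subgraph_def by auto
    then show "e \<in> snd (A_graph l)" using h unfolding sndF by auto
  qed
  then show "subgraph H (A_graph l)" using h v unfolding subgraph_def fstA by blast
qed

lemma decomp:
  assumes "l \<ge> 1"
  shows "int (F_degree F (F_graph l t) x) - int (F_degree F (A_graph l) x) = int (card (Scop F l t x))"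
proof -
  let ?C = "{H. subgraph H (F_graph l t) \<and> isomorphic H F \<and> x \<in> fst H}"
  have fin: "finite ?C" by (rule fin_sub) simp
  have eqA: "{H. subgraph H (A_graph l) \<and> isomorphic H F \<and> x \<in> fst H} = {H \<in> ?C. 2*l \<notin> fst H}"
    using sub_A_iff[OF assms] by blast
  have eqS: "Scop F l t x = {H \<in> ?C. 2*l \<in> fst H}" by (auto simp: Scop_def)
  have un: "?C = {H \<in> ?C. 2*l \<notin> fst H} \<union> {H \<in> ?C. 2*l \<in> fst H}" by blast
  have "card ?C = card {H \<in> ?C. 2*l \<notin> fst H} + card {H \<in> ?C. 2*l \<in> fst H}"
    by (subst un, rule card_Un_disjoint) (use fin in \<open>auto intro: finite_subset[OF _ fin]\<close>)
  then show ?thesis unfolding F_degree_def eqA eqS by simp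
qed

definition sig :: "nat \<Rightarrow> nat \<Rightarrow> nat \<Rightarrow> nat" where
  "sig i l x = (if x = i then l else if x = l then i else x)"

definition gimg :: "('a \<Rightarrow> 'b) \<Rightarrow> 'a graph \<Rightarrow> 'b graph" where
  "gimg f H = (f ` fst H, (\<lambda>e. f ` e) ` snd H)"

lemma sig_sig[simp]: "sig i l (sig i l x) = x" by (simp add: sig_def)

lemma img_invol: "(\<And>x. s (s x) = x) \<Longrightarrow> s ` (s ` A) = A"
  by (simp add: image_comp comp_def)

lemma gimg_invol: "(\<And>x. s (s x) = x) \<Longrightarrow> gimg s (gimg s H) = H"
proof -
  assume a: "\<And>x. s (s x) = x"
  have "(\<lambda>e. s ` e) ` ((\<lambda>e. s ` e) ` E) = E" for E :: "'a set set"
    by (rule img_invol) (simp add: img_invol[OF a])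
  then show ?thesis using img_invol[OF a] by (simp add: gimg_def)
qed

lemma mem_img_invol: "(\<And>x. s (s x) = x) \<Longrightarrow> X \<in> (\<lambda>e. s ` e) ` E \<longleftrightarrow> s ` X \<in> E"
proof -
  assume a: "\<And>x. s (s x) = x"
  show ?thesis
  proof
    assume "X \<in> (\<lambda>e. s ` e) ` E"
    then obtain e where "e \<in> E" "X = s ` e" by auto
    then show "s ` X \<in> E" using img_invol[OF a] by simp
  next
    assume "s ` X \<in> E"
    then show "X \<in> (\<lambda>e. s ` e) ` E" using img_invol[OF a, of X] by (metis image_eqI)
  qed
qed

lemma gimg_adj: "(\<And>x. s (s x) = x) \<Longrightarrow> adj (gimg s H) x y \<longleftrightarrow> adj H (s x) (s y)"
  by (simp add: adj_def gimg_def mem_img_invol)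

lemma gimg_iso:
  assumes a: "\<And>x. s (s x) = x" and iso: "isomorphic H F"
  shows "isomorphic (gimg s H) F"
proof -
  obtain f where f: "bij_betw f (fst H) (fst F)" "\<forall>x\<in>fst H. \<forall>y\<in>fst H. adj H x y \<longleftrightarrow> adj F (f x) (f y)"
    using iso unfolding isomorphic_def by blast
  have inj: "inj s" by (metis a injI)
  have b1: "bij_betw s (s ` fst H) (fst H)"
    by (simp add: bij_betw_def inj_on_def img_invol[OF a]) (metis a)
  have "bij_betw (f \<circ> s) (fst (gimg s H)) (fst F)"
    unfolding gimg_def fst_conv by (rule bij_betw_trans[OF b1 f(1)])
  moreover have "\<forall>x\<in>fst (gimg s H). \<forall>y\<in>fst (gimg s H). adj (gimg s H) x y \<longleftrightarrow> adj F ((f \<circ> s) x) ((f \<circ> s) y)"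
  proof (intro ballI)
    fix x y assume "x \<in> fst (gimg s H)" "y \<in> fst (gimg s H)"
    then have "s x \<in> fst H" "s y \<in> fst H" unfolding gimg_def by (auto simp: a)
    then show "adj (gimg s H) x y \<longleftrightarrow> adj F ((f \<circ> s) x) ((f \<circ> s) y)"
      using f(2) gimg_adj[OF a] by simp
  qed
  ultimately show ?thesis unfolding isomorphic_def by blast
qed

lemma sw_edge:
  assumes tl: "t < l" and li: "l < i" and i2: "i < 2*l"
    and e: "e \<in> snd (F_graph l t)" and nl: "l \<notin> e"
  shows "sig i l ` e \<in> snd (F_graph l t)"
proof (cases "e \<in> snd (A_graph l)")
  case True
  then obtain a b where ab: "e = {a,b}" "a \<in> {1..2*l-1}" "b \<in> {1..2*l-1}" "a \<noteq> b"
     "a - b \<le> l - 1" "b - a \<le> l - 1" unfolding sndA by blast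
  have anl: "a \<noteq> l" "b \<noteq> l" using nl ab by auto
  have lb: "{l, c} \<in> snd (A_graph l)" if "c \<in> {1..2*l-1}" "c \<noteq> l" for c
  proof -
    have "l \<in> {1..2*l-1}" using tl by auto
    moreover have "l - c \<le> l - 1" "c - l \<le> l - 1" using that by auto
    ultimately show ?thesis unfolding sndA using that by blast
  qed
  have "sig i l ` e \<in> snd (A_graph l)"
  proof (cases "a = i")
    case True
    then have "b \<noteq> i" using ab by auto
    then have "sig i l ` e = {l, b}" using True anl unfolding ab sig_def by auto
    then show ?thesis using lb ab anl by simp
  next
    case False
    show ?thesis
    proof (cases "b = i")
      case True
      then have "sig i l ` e = {l, a}" using False anl unfolding ab sig_def by auto
      then show ?thesis using lb ab anl by simp
    next
      case False2: False
      then have "sig i l ` e = e" using False anl unfolding ab sig_def by auto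
      then show ?thesis using \<open>e \<in> snd (A_graph l)\<close> by simp
    qed
  qed
  then show ?thesis unfolding sndF by blast
next
  case False
  then obtain j where j: "e = {2*l, j}" "j \<in> {1..t}" using e unfolding sndF by blast
  have "sig i l ` e = e" unfolding j sig_def using tl li i2 j by auto
  then show ?thesis using e by simp
qed

lemma sw_in:
  assumes tl: "t < l" and li: "l < i" and i2: "i < 2*l"
    and H: "H \<in> Scop F l t i" and nl: "l \<notin> fst H"
  shows "gimg (sig i l) H \<in> Scop F l t l"
proof -
  have sH: "subgraph H (F_graph l t)" "isomorphic H F" "i \<in> fst H" "2*l \<in> fst H"
    using H unfolding Scop_def by auto
  have v: "sig i l ` fst H \<subseteq> {1..2*l}"
  proof
    fix x assume "x \<in> sig i l ` fst H"
    then obtain y where y: "y \<in> fst H" "x = sig i l y" by auto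
    then have "y \<in> {1..2*l}" using sH(1) unfolding subgraph_def by auto
    then show "x \<in> {1..2*l}" using y li i2 by (auto simp: sig_def)
  qed
  have ed: "\<forall>e \<in> snd H. sig i l ` e \<in> snd (F_graph l t) \<and> sig i l ` e \<subseteq> sig i l ` fst H"
  proof
    fix e assume "e \<in> snd H"
    then have "e \<in> snd (F_graph l t)" "e \<subseteq> fst H" using sH(1) unfolding subgraph_def by auto
    then show "sig i l ` e \<in> snd (F_graph l t) \<and> sig i l ` e \<subseteq> sig i l ` fst H"
      using sw_edge[OF tl li i2] nl by blast
  qed
  have "subgraph (gimg (sig i l) H) (F_graph l t)"
    unfolding subgraph_def gimg_def fst_conv snd_conv fstF using v ed by blast
  moreover have "isomorphic (gimg (sig i l) H) F" by (rule gimg_iso[OF sig_sig sH(2)])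
  moreover have "sig i l i = l" "sig i l (2*l) = 2*l" using li i2 by (auto simp: sig_def)
  then have "l \<in> fst (gimg (sig i l) H)" "2*l \<in> fst (gimg (sig i l) H)" using sH(3,4) unfolding gimg_def fst_conv
    by (metis image_eqI)+
  ultimately show ?thesis unfolding Scop_def by blast
qed

lemma not_edge_i1:
  assumes "l < i" "i < 2*l"
  shows "{i, 1} \<notin> snd (F_graph l t)"
proof
  assume "{i, 1} \<in> snd (F_graph l t)"
  then consider "{i,1} \<in> snd (A_graph l)" | j where "{i,1} = {2*l, j}" unfolding sndF by auto
  then show False
  proof cases
    case 1
    then obtain a b where ab: "{i,1} = {a,b}" "a - b \<le> l - 1" "b - a \<le> l - 1" unfolding sndA by blast
    then have "(a = i \<and> b = 1) \<or> (a = 1 \<and> b = i)" by (simp add: doubleton_eq_iff) blast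
    then show False
    proof
      assume "a = i \<and> b = 1" then have "i - 1 \<le> l - 1" using ab by simp
      then show False using assms by linarith
    next
      assume "a = 1 \<and> b = i" then have "i - 1 \<le> l - 1" using ab by simp
      then show False using assms by linarith
    qed
  next
    case 2
    then have "i \<in> {2*l, j}" "1 \<in> {2*l, j}" by (metis insertCI)+
    moreover have "i \<noteq> 2*l" "(1::nat) \<noteq> 2*l" using assms by auto
    ultimately have "i = 1" by auto
    then show False using assms by auto
  qed
qed

lemma fin_Scop: "finite (Scop F l t x)"
  unfolding Scop_def by (rule fin_sub) simp

lemma count_lt:
  assumes tl: "t < l" and li: "l < i" and i2: "i < 2*l" and l1: "1 < l"
    and H0: "H0 \<in> Scop F l t l" and H0i: "i \<notin> fst H0" and H0e: "{l, 1} \<in> snd H0"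
  shows "card (Scop F l t i) < card (Scop F l t l)"
proof -
  define phi where "phi H = (if l \<in> fst H then H else gimg (sig i l) H)" for H :: "nat graph"
  have sub: "phi ` Scop F l t i \<subseteq> Scop F l t l"
  proof
    fix K assume "K \<in> phi ` Scop F l t i"
    then obtain H where H: "H \<in> Scop F l t i" "K = phi H" by auto
    show "K \<in> Scop F l t l"
    proof (cases "l \<in> fst H")
      case True then show ?thesis using H unfolding phi_def Scop_def by auto
    next
      case False then show ?thesis using H sw_in[OF tl li i2 H(1) False] unfolding phi_def by simp
    qed
  qed
  have iS: "i \<in> fst H" if "H \<in> Scop F l t i" for H using that unfolding Scop_def by auto
  have nis: "i \<notin> fst (gimg (sig i l) H)" if "l \<notin> fst H" for H
    using that unfolding gimg_def sig_def by auto
  have inj: "inj_on phi (Scop F l t i)"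
  proof (rule inj_onI)
    fix H1 H2 assume h: "H1 \<in> Scop F l t i" "H2 \<in> Scop F l t i" "phi H1 = phi H2"
    show "H1 = H2"
    proof (cases "l \<in> fst H1"; cases "l \<in> fst H2")
      assume "l \<in> fst H1" "l \<in> fst H2" then show ?thesis using h unfolding phi_def by simp
    next
      assume a: "l \<in> fst H1" "l \<notin> fst H2"
      then have "H1 = gimg (sig i l) H2" using h unfolding phi_def by simp
      then show ?thesis using nis[OF a(2)] iS[OF h(1)] by simp
    next
      assume a: "l \<notin> fst H1" "l \<in> fst H2"
      then have "H2 = gimg (sig i l) H1" using h unfolding phi_def by simp
      then show ?thesis using nis[OF a(1)] iS[OF h(2)] by simp
    next
      assume a: "l \<notin> fst H1" "l \<notin> fst H2"
      then have "gimg (sig i l) H1 = gimg (sig i l) H2" using h unfolding phi_def by simp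
      then have "gimg (sig i l) (gimg (sig i l) H1) = gimg (sig i l) (gimg (sig i l) H2)" by simp
      then show ?thesis by (simp add: gimg_invol)
    qed
  qed
  have notin: "H0 \<notin> phi ` Scop F l t i"
  proof
    assume "H0 \<in> phi ` Scop F l t i"
    then obtain H where H: "H \<in> Scop F l t i" "H0 = phi H" by auto
    show False
    proof (cases "l \<in> fst H")
      case True then show False using H H0i iS[OF H(1)] unfolding phi_def by simp
    next
      case False
      then have "H0 = gimg (sig i l) H" using H unfolding phi_def by simp
      then have HH: "H = gimg (sig i l) H0" by (simp add: gimg_invol)
      have "sig i l ` {l, 1} = {i, 1}" using l1 li unfolding sig_def by auto
      then have "{i,1} \<in> snd H" unfolding HH gimg_def using H0e by (metis image_eqI snd_conv)
      moreover have "subgraph H (F_graph l t)" using H(1) unfolding Scop_def by auto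
      ultimately have "{i,1} \<in> snd (F_graph l t)" unfolding subgraph_def by auto
      then show False using not_edge_i1[OF li i2] by simp
    qed
  qed
  have "phi ` Scop F l t i \<subset> Scop F l t l" using sub notin H0 by blast
  then have "card (phi ` Scop F l t i) < card (Scop F l t l)"
    by (rule psubset_card_mono[OF fin_Scop])
  moreover have "card (phi ` Scop F l t i) = card (Scop F l t i)" by (rule card_image[OF inj])
  ultimately show ?thesis by simp
qed




lemma adj_sym: "adj G x y = adj G y x" by (simp add: adj_def insert_commute)

lemma sg_edge: "simple_graph F \<Longrightarrow> e \<in> snd F \<Longrightarrow> \<exists>x y. x \<in> fst F \<and> y \<in> fst F \<and> x \<noteq> y \<and> e = {x, y}"
  unfolding simple_graph_def by blast

lemma noloop: "simple_graph F \<Longrightarrow> \<not> adj F x x"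
proof
  assume s: "simple_graph F" and a: "adj F x x"
  then have "{x} \<in> snd F" by (simp add: adj_def)
  then obtain a b where "a \<noteq> b" "{x} = {a, b}" using sg_edge[OF s] by blast
  then show False by (metis insertCI singletonD)
qed

lemma adjV: "simple_graph F \<Longrightarrow> adj F x y \<Longrightarrow> x \<in> fst F \<and> y \<in> fst F"
proof -
  assume s: "simple_graph F" and a: "adj F x y"
  then have "{x,y} \<in> snd F" by (simp add: adj_def)
  then obtain a b where "a \<in> fst F" "b \<in> fst F" "{x,y} = {a, b}" using sg_edge[OF s] by blast
  then show ?thesis by (metis doubleton_eq_iff)
qed

lemma edge_sub: "simple_graph F \<Longrightarrow> \<forall>e\<in>snd F. e \<subseteq> fst F"
  using sg_edge by fastforce

lemma dist_le: "walk_between G x y k \<Longrightarrow> graph_dist G x y \<le> k"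
  unfolding graph_dist_def by (rule Least_le)

lemma walk0: "x \<in> fst G \<Longrightarrow> walk_between G x x 0"
  unfolding walk_between_def is_walk_def by (rule exI[of _ "[x]"]) simp

lemma walk1: "adj G x y \<Longrightarrow> x \<in> fst G \<Longrightarrow> y \<in> fst G \<Longrightarrow> walk_between G x y 1"
  unfolding walk_between_def is_walk_def by (rule exI[of _ "[x,y]"]) simp

lemma walk_le2:
  assumes "walk_between G x y k" "k \<le> 2"
  shows "x = y \<or> adj G x y \<or> (\<exists>u \<in> fst G. adj G x u \<and> adj G u y)"
proof -
  obtain p where p: "is_walk G p" "hd p = x" "last p = y" "length p = Suc k"
    using assms unfolding walk_between_def by blast
  have ne: "p \<noteq> []" and st: "set p \<subseteq> fst G" and ad: "\<forall>i < length p - 1. adj G (p ! i) (p ! Suc i)"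
    using p(1) unfolding is_walk_def by auto
  have hx: "p ! 0 = x" using p(2) ne by (simp add: hd_conv_nth)
  have ly: "p ! k = y" using p(3,4) ne by (simp add: last_conv_nth)
  have "k = 0 \<or> k = 1 \<or> k = 2" using assms(2) by auto
  then show ?thesis
  proof (elim disjE)
    assume "k = 0" then show ?thesis using hx ly by simp
  next
    assume k: "k = 1" then have "adj G (p!0) (p!1)" using ad p(4) by auto
    then show ?thesis using hx ly k by simp
  next
    assume k: "k = 2" then have "adj G (p!0) (p!1)" "adj G (p!1) (p!2)" using ad p(4)
      by (auto dest: spec[of _ 0] spec[of _ 1] simp: numeral_2_eq_2)
    moreover have "p ! 1 \<in> fst G" using st p(4) k by auto
    ultimately show ?thesis using hx ly k by blast
  qed
qed

lemma embed_iso: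
  assumes inj: "inj_on g (fst F)" and es: "\<forall>e\<in>snd F. e \<subseteq> fst F"
  shows "isomorphic (gimg g F) F"
proof -
  have b: "bij_betw g (fst F) (g ` fst F)" using inj by (simp add: bij_betw_def)
  have bi: "bij_betw (inv_into (fst F) g) (fst (gimg g F)) (fst F)"
    unfolding gimg_def fst_conv by (rule bij_betw_inv_into[OF b])
  have key: "adj (gimg g F) (g a) (g b) \<longleftrightarrow> adj F a b" if ab: "a \<in> fst F" "b \<in> fst F" for a b
  proof
    assume "adj (gimg g F) (g a) (g b)"
    then have "{g a, g b} \<in> (\<lambda>e. g ` e) ` snd F" unfolding adj_def gimg_def by simp
    then obtain e where e: "e \<in> snd F" "g ` {a, b} = g ` e" by auto
    then have "{a,b} = e" using inj_on_image_eq_iff[OF inj, of "{a,b}" e] es ab by auto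
    then show "adj F a b" using e by (simp add: adj_def)
  next
    assume "adj F a b"
    then have "{a,b} \<in> snd F" by (simp add: adj_def)
    then have "g ` {a,b} \<in> (\<lambda>e. g ` e) ` snd F" by (rule imageI)
    then show "adj (gimg g F) (g a) (g b)" unfolding adj_def gimg_def by simp
  qed
  have "\<forall>x\<in>fst (gimg g F). \<forall>y\<in>fst (gimg g F). adj (gimg g F) x y \<longleftrightarrow> adj F (inv_into (fst F) g x) (inv_into (fst F) g y)"
  proof (intro ballI)
    fix x y assume "x \<in> fst (gimg g F)" "y \<in> fst (gimg g F)"
    then obtain a b where ab: "a \<in> fst F" "b \<in> fst F" "x = g a" "y = g b" unfolding gimg_def by auto
    then show "adj (gimg g F) x y \<longleftrightarrow> adj F (inv_into (fst F) g x) (inv_into (fst F) g y)"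
      using key[OF ab(1,2)] inv_into_f_f[OF inj] by simp
  qed
  then show ?thesis unfolding isomorphic_def using bi by blast
qed




lemma graph_facts:
  assumes s: "simple_graph F" and d: "has_diameter F 2"
  shows "\<exists>v u w. v \<in> fst F \<and> degree F v = min_degree F \<and> adj F v u \<and> adj F u w \<and> w \<in> fst F
     \<and> w \<noteq> v \<and> \<not> adj F v w"
proof -
  let ?V = "fst F"
  have fin: "finite ?V" using s unfolding simple_graph_def by blast
  have con: "connected_graph F" and mx: "Max {graph_dist F u v | u v. u \<in> ?V \<and> v \<in> ?V} = 2"
    using d unfolding has_diameter_def by auto
  have ne: "?V \<noteq> {}" using con unfolding connected_graph_def by blast
  have finD: "finite {graph_dist F u v | u v. u \<in> ?V \<and> v \<in> ?V}"
    using finite_image_set2[of "\<lambda>u. u \<in> ?V" "\<lambda>v. v \<in> ?V" "graph_dist F"] fin by simp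
  have dle: "graph_dist F x y \<le> 2" if "x \<in> ?V" "y \<in> ?V" for x y
  proof -
    have "graph_dist F x y \<in> {graph_dist F u v | u v. u \<in> ?V \<and> v \<in> ?V}" using that by blast
    from Max_ge[OF finD this] show ?thesis unfolding mx .
  qed
  have wk: "walk_between F x y (graph_dist F x y)" if "x \<in> ?V" "y \<in> ?V" for x y
  proof -
    have "\<exists>k. walk_between F x y k" using con that unfolding connected_graph_def by blast
    then show ?thesis unfolding graph_dist_def by (rule LeastI_ex)
  qed
  have "Min (degree F ` ?V) \<in> degree F ` ?V" using fin ne by (intro Min_in) auto
  then obtain v where v: "v \<in> ?V" "degree F v = min_degree F"
    unfolding min_degree_def by (metis imageE)
  have mind: "min_degree F \<le> degree F x" if "x \<in> ?V" for x
    unfolding min_degree_def using fin that by simp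
  obtain w where w: "w \<in> ?V" "w \<noteq> v" "\<not> adj F v w"
  proof (rule ccontr)
    assume "\<not> thesis"
    with that have all: "\<forall>w\<in>?V. w \<noteq> v \<longrightarrow> adj F v w" by blast
    have nbr: "{u \<in> ?V. adj F x u} = ?V - {x}" if "x \<in> ?V" for x
    proof -
      have sub: "{u \<in> ?V. adj F x u} \<subseteq> ?V - {x}" using noloop[OF s, of x] by blast
      have "{u \<in> ?V. adj F v u} = ?V - {v}" using all noloop[OF s, of v] by blast
      then have "degree F v = card (?V - {v})" unfolding degree_def by simp
      also have "\<dots> = card (?V - {x})" using v(1) that fin by (simp add: card_Diff_singleton)
      finally have "card (?V - {x}) \<le> card {u \<in> ?V. adj F x u}"
        using v(2) mind[OF that] unfolding degree_def by simp
      moreover have "card {u \<in> ?V. adj F x u} \<le> card (?V - {x})"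
        by (rule card_mono[OF _ sub]) (use fin in simp)
      ultimately show ?thesis
        by (intro card_subset_eq[OF _ sub]) (use fin in simp_all)
    qed
    have d1: "graph_dist F x y \<le> 1" if "x \<in> ?V" "y \<in> ?V" for x y
    proof (cases "x = y")
      case True then show ?thesis using dist_le[OF walk0[OF that(1)]] by simp
    next
      case False
      then have "adj F x y" using nbr[OF that(1)] that by blast
      from dist_le[OF walk1[OF this that]] show ?thesis .
    qed
    then have "Max {graph_dist F u v | u v. u \<in> ?V \<and> v \<in> ?V} \<le> 1"
    proof (subst Max_le_iff[OF finD])
      show "{graph_dist F u v | u v. u \<in> ?V \<and> v \<in> ?V} \<noteq> {}" using ne by blast
      show "\<forall>a\<in>{graph_dist F u v | u v. u \<in> ?V \<and> v \<in> ?V}. a \<le> 1" using d1 by blast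
    qed
    then show False using mx by simp
  qed
  have "v = w \<or> adj F v w \<or> (\<exists>u \<in> ?V. adj F v u \<and> adj F u w)"
    by (rule walk_le2[OF wk[OF v(1) w(1)] dle[OF v(1) w(1)]])
  then obtain u where "adj F v u" "adj F u w" using w by blast
  then show ?thesis using v w by blast
qed




lemma exists_H0:
  assumes s: "simple_graph F" and d: "has_diameter F 2" and nl: "card (fst F) < l"

  shows "min_degree F + 2 \<le> card (fst F) \<and>
    (\<exists>H0. H0 \<in> Scop F l (min_degree F) l \<and> (\<forall>i. l < i \<and> i < 2*l \<longrightarrow> i \<notin> fst H0) \<and> {l, 1} \<in> snd H0)"
proof -
  let ?V = "fst F"
  let ?t = "min_degree F"
  have fin: "finite ?V" using s unfolding simple_graph_def by blast
  obtain v u w where vuw: "v \<in> ?V" "degree F v = ?t" "adj F v u" "adj F u w" "w \<in> ?V"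
     "w \<noteq> v" "\<not> adj F v w"
    using graph_facts[OF s d] by blast
  define N where "N = {x \<in> ?V. adj F v x}"
  have cN: "card N = ?t" using vuw(2) unfolding N_def degree_def by simp
  have uV: "u \<in> ?V" using adjV[OF s vuw(3)] by simp
  have uN: "u \<in> N" using uV vuw(3) unfolding N_def by simp
  have wN: "w \<notin> N" "v \<notin> N" using vuw(7) noloop[OF s] unfolding N_def by auto
  have NV: "N \<subseteq> ?V - {v, w}" using wN unfolding N_def by auto
  have cVvw: "card (?V - {v, w}) = card ?V - 2" using vuw fin
    by (simp add: card_Diff_subset)
  have cNle: "card N \<le> card (?V - {v,w})" by (rule card_mono[OF _ NV]) (use fin in simp)
  have tn: "?t + 2 \<le> card ?V"
  proof -
    have "{v,w} \<subseteq> ?V" using vuw(1,5) by simp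
    from card_mono[OF fin this] have "card ?V \<ge> 2" using vuw(6) by simp
    then show ?thesis using cNle cVvw cN by linarith
  qed
  define R where "R = (?V - {v, w}) - N"
  have cR: "card R = card ?V - 2 - ?t" unfolding R_def using NV fin cVvw cN
    by (simp add: card_Diff_subset finite_subset)
  have "card (N - {u}) \<le> card {2..?t}" using cN uN by simp
  then obtain gN where gN: "gN ` (N - {u}) \<subseteq> {2..?t}" "inj_on gN (N - {u})"
    using card_le_inj[of "N - {u}" "{2..?t}"] fin NV finite_subset by blast
  have "card R \<le> card {?t+1..l-1}" using cR nl by simp
  then obtain gR where gR: "gR ` R \<subseteq> {?t+1..l-1}" "inj_on gR R"
    using card_le_inj[of R "{?t+1..l-1}"] fin unfolding R_def by blast
  define g where "g x = (if x = v then 2*l else if x = u then 1 else if x = w then l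
     else if x \<in> N then gN x else gR x)" for x
  have uv: "u \<noteq> v" "u \<noteq> w" using uN wN by auto
  have gv: "g v = 2*l" and gu: "g u = 1" and gw: "g w = l" using uv vuw(6) unfolding g_def by auto
  have gNx: "g x = gN x" "gN x \<in> {2..?t}" if "x \<in> N - {u}" for x
    using that wN gN(1) unfolding g_def by auto
  have gRx: "g x = gR x" "gR x \<in> {?t+1..l-1}" if "x \<in> R" for x
    using that uN gR(1) unfolding g_def R_def by auto
  have cls: "x = v \<or> x = u \<or> x = w \<or> x \<in> N - {u} \<or> x \<in> R" if "x \<in> ?V" for x
    using that unfolding R_def by blast
  have tl: "?t < l" using tn nl by linarith
  have P1: "g x \<in> {1..l}" if "x \<in> ?V" "x \<noteq> v" for x
    using cls[OF that(1)] that(2) gu gw gNx gRx tl by fastforce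
  have finN: "finite N" using fin NV finite_subset by blast
  have t1: "?t \<ge> 1" using cN uN finN by (metis card_0_eq empty_iff less_one not_le)
  have P2: "g x \<in> {1..?t}" if "x \<in> N" for x
  proof (cases "x = u")
    case True then show ?thesis using gu t1 by simp
  next
    case False then show ?thesis using gNx[of x] that by force
  qed
  have inj: "inj_on g ?V"
  proof (rule inj_onI)
    fix x y assume xy: "x \<in> ?V" "y \<in> ?V" "g x = g y"
    have A: "z = v \<longleftrightarrow> g z = 2*l" "z = u \<longleftrightarrow> g z = 1" "z = w \<longleftrightarrow> g z = l"
      if "z \<in> ?V" for z
      using cls[OF that] gv gu gw gNx[of z] gRx[of z] tl uv vuw(6) t1 by auto
    show "x = y"
      using cls[OF xy(1)]
    proof (elim disjE)
      assume "x \<in> N - {u}"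
      then have "y \<in> N - {u}" using cls[OF xy(2)] gNx[of x] gRx[of y] A[OF xy(1)] A[OF xy(2)] xy(3) by force
      then show ?thesis using \<open>x \<in> N - {u}\<close> gNx xy(3) inj_onD[OF gN(2)] by metis
    next
      assume "x \<in> R"
      then have "y \<in> R" using cls[OF xy(2)] gNx[of y] gRx[of x] A[OF xy(1)] A[OF xy(2)] xy(3) by force
      then show ?thesis using \<open>x \<in> R\<close> gRx xy(3) inj_onD[OF gR(2)] by metis
    qed (use A[OF xy(1)] A[OF xy(2)] xy(3) in simp_all)
  qed
  define H0 where "H0 = gimg g F"
  have es: "\<forall>e\<in>snd F. e \<subseteq> ?V" by (rule edge_sub[OF s])
  have fH: "fst H0 = g ` ?V" "snd H0 = (\<lambda>e. g ` e) ` snd F" unfolding H0_def gimg_def by auto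
  have vs: "g ` ?V \<subseteq> {1..2*l}"
  proof
    fix y assume "y \<in> g ` ?V"
    then obtain x where x: "x \<in> ?V" "y = g x" by blast
    show "y \<in> {1..2*l}"
    proof (cases "x = v")
      case True then show ?thesis using x gv tl by simp
    next
      case False then show ?thesis using P1[OF x(1) False] x by auto
    qed
  qed
  have edges: "g ` e \<in> snd (F_graph l ?t)" if e: "e \<in> snd F" for e
  proof -
    obtain a b where ab: "a \<in> ?V" "b \<in> ?V" "a \<noteq> b" "e = {a,b}" using sg_edge[OF s e] by blast
    have ge: "g ` e = {g a, g b}" using ab by simp
    have adjab: "adj F a b" using e ab by (simp add: adj_def)
    show ?thesis
    proof (cases "a = v \<or> b = v")
      case True
      have "\<exists>c \<in> N. g ` e = {2*l, g c}"
        using True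
      proof (elim disjE)
        assume "a = v"
        then have "b \<in> N" using adjab ab unfolding N_def by simp
        then show ?thesis using ge gv \<open>a = v\<close> by (intro bexI[of _ b]) simp_all
      next
        assume "b = v"
        then have "adj F v a" using adjab adj_sym[of F a b] by simp
        then have "a \<in> N" using ab unfolding N_def by simp
        moreover have "g ` e = {2*l, g a}" using ge gv \<open>b = v\<close> by (simp add: insert_commute)
        ultimately show ?thesis by (intro bexI[of _ a])
      qed
      then obtain c where c: "c \<in> N" "g ` e = {2*l, g c}" by (elim bexE)
      have "g c \<in> {1..?t}" using P2[OF c(1)] .
      then have "g ` e \<in> {{2*l, j} | j. j \<in> {1..?t}}" unfolding c(2) by (intro CollectI exI[of _ "g c"]) simp
      then show ?thesis unfolding sndF by (rule UnI2)
    next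
      case False
      then have r: "g a \<in> {1..l}" "g b \<in> {1..l}" using P1[OF ab(1)] P1[OF ab(2)] by simp_all
      have "g a \<noteq> g b" using inj_onD[OF inj _ ab(1,2)] ab(3) by blast
      moreover have "g a \<in> {1..2*l-1}" "g b \<in> {1..2*l-1}" "g a - g b \<le> l - 1" "g b - g a \<le> l - 1"
        using r by auto
      ultimately have "g ` e \<in> snd (A_graph l)" unfolding sndA ge
        by (intro exI[of _ "g a"] exI[of _ "g b"]) simp
      then show ?thesis unfolding sndF by (rule UnI1)
    qed
  qed
  have sub: "subgraph H0 (F_graph l ?t)"
    unfolding subgraph_def fH fstF
  proof (intro conjI)
    show "g ` ?V \<subseteq> {1..2*l}" by (rule vs)
    show "(\<lambda>e. g ` e) ` snd F \<subseteq> snd (F_graph l ?t)" using edges by (rule image_subsetI)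
    show "\<forall>e\<in>(\<lambda>e. g ` e) ` snd F. e \<subseteq> g ` ?V" using es by (auto intro: image_mono)
  qed
  have iso: "isomorphic H0 F" unfolding H0_def by (rule embed_iso[OF inj es])
  have lin: "l \<in> fst H0" "2*l \<in> fst H0" unfolding fH using image_eqI[of l g w] image_eqI[of "2*l" g v] gw gv vuw(1,5) by auto
  have inot: "i \<notin> fst H0" if li: "l < i" and i2: "i < 2*l" for i
  proof
    assume "i \<in> fst H0"
    then obtain x where x: "x \<in> ?V" "i = g x" unfolding fH by blast
    show False
    proof (cases "x = v")
      case True then show False using x gv i2 by simp
    next
      case False then show False using P1[OF x(1) False] x li by auto
    qed
  qed
  have "{u, w} \<in> snd F" using vuw(4) by (simp add: adj_def)
  then have "g ` {u, w} \<in> snd H0" unfolding fH by (rule imageI)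
  moreover have "g ` {u, w} = {l, 1}" using gu gw by (simp add: insert_commute)
  ultimately have "{l, 1} \<in> snd H0" by simp
  then show ?thesis using tn sub iso lin inot unfolding Scop_def by blast
qed
theorem lemma11:
  fixes F :: "'a graph" and l :: nat
  assumes "simple_graph F"
    and "has_diameter F 2"
    and "min_degree F \<ge> 2"
    and "l > card (fst F)"
  shows "\<forall>i \<in> {l+1..l + min_degree F - 1}.
           int (F_degree F (F_graph l (min_degree F)) i) - int (F_degree F (A_graph l) i)
         < int (F_degree F (F_graph l (min_degree F)) l) - int (F_degree F (A_graph l) l)"
proof (intro ballI)
  fix i assume i: "i \<in> {l+1..l + min_degree F - 1}"
  obtain H0 where tn: "min_degree F + 2 \<le> card (fst F)" and H0: "H0 \<in> Scop F l (min_degree F) l"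
    "\<forall>i. l < i \<and> i < 2*l \<longrightarrow> i \<notin> fst H0" "{l, 1} \<in> snd H0"
    using exists_H0[OF assms(1,2,4)] by blast
  have tl: "min_degree F < l" and l1: "1 < l" using tn assms(4) by linarith+
  have li: "l < i" and i2: "i < 2*l" using i tl by auto
  have "card (Scop F l (min_degree F) i) < card (Scop F l (min_degree F) l)"
    by (rule count_lt[OF tl li i2 l1 H0(1)]) (use H0 li i2 in auto)
  then show "int (F_degree F (F_graph l (min_degree F)) i) - int (F_degree F (A_graph l) i)
         < int (F_degree F (F_graph l (min_degree F)) l) - int (F_degree F (A_graph l) l)"
    using decomp[of l F "min_degree F" i] decomp[of l F "min_degree F" l] l1 by simp
qed


end
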